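(* Let $a>0$ and let \[ h(s)=\frac{a^2s^2}{(1-a)s^2+2s+1}. \] Define the family of real rational transfer functions $(F_N)_{N\in\mathbb{N}}$ recursively by \[ F_{N+1}(s)=\frac{F_N(s)+h(s)}{F_N(s)+h(s)+1},\qquad F_0(s)=0. \] Then \[ \sup_{N\in\mathbb{N}}\|F_N\|_\infty\le a . \]
   Context: For a transfer function $G$ (a function of the complex variable $s$), $\|G\|_\infty:=\sup_{s\in\mathbb{C}_+}|G(s)|$, where $\mathbb{C}_+$ denotes the open right half of the complex plane; the space $\mathscr{H}_\infty$ consists of the transfer functions analytic on $\mathbb{C}_+$ with finite such norm. *)

theory Defs
  imports "HOL-Analysis.Analysis" "HOL-Computational_Algebra.Computational_Algebra" "HOL-Computational_Algebra.Field_as_Ring" "HOL-Computational_Algebra.Polynomial_Factorial" "HOL-Computational_Algebra.Normalized_Fraction"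
    "HOL-Library.Extended_Real"
begin

text \<open>Real rational transfer functions are modelled as elements of the field of
  rational functions \<open>complex poly fract\<close> (with real coefficients where needed).
  Evaluation uses the reduced (coprime) numerator/denominator representation,
  so that removable singularities are removed.\<close>

definition rnum :: "complex poly fract \<Rightarrow> complex poly" where
  "rnum G = fst (quot_of_fract G)"

definition rden :: "complex poly fract \<Rightarrow> complex poly" where
  "rden G = snd (quot_of_fract G)"

definition reval :: "complex poly fract \<Rightarrow> complex \<Rightarrow> complex" where
  "reval G s = poly (rnum G) s / poly (rden G) s"

definition in_Hinf :: "complex poly fract \<Rightarrow> bool" where
  "in_Hinf G \<longleftrightarrow> (reval G) holomorphic_on {s. 0 < Re s} \<and>
                  (\<forall>s. 0 < Re s \<longrightarrow> poly (rden G) s \<noteq> 0) \<and>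
                  bounded (reval G ` {s. 0 < Re s})"

definition Hinf_norm :: "complex poly fract \<Rightarrow> ereal" where
  "Hinf_norm G = (if in_Hinf G then (SUP s\<in>{s. 0 < Re s}. ereal (cmod (reval G s))) else \<infinity>)"

definition hfun :: "real \<Rightarrow> complex poly fract" where
  "hfun a = Fract [:0, 0, complex_of_real (a^2):] [:1, 2, complex_of_real (1 - a):]"

fun Ffam :: "real \<Rightarrow> nat \<Rightarrow> complex poly fract" where
  "Ffam a 0 = 0"
| "Ffam a (Suc N) = (Ffam a N + hfun a) / (Ffam a N + hfun a + 1)"

end

theory Submission
  imports Defs
begin


lemma real_core:
  fixes K p q y a :: real
  assumes a: "a > 0" and K: "K = a^2 - a*y^2" and py: "y \<le> p" and y0: "0 \<le> y" and y2: "y \<le> 2"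
  shows "(a*y*(2-y))^2 \<le> (K + p^2 - q^2)^2 + (2*p*q)^2"
proof (cases "K \<le> p^2")
  case True
  have e1: "(K + p^2 - q^2)^2 + (2*p*q)^2 = (K+p^2)^2 + q^2*(q^2 + 2*p^2 - 2*K)"
    by (simp add: power2_eq_square algebra_simps)
  have "q^2 + 2*p^2 - 2*K \<ge> 0" using True by (smt (verit) zero_le_power2)
  hence "q^2*(q^2 + 2*p^2 - 2*K) \<ge> 0" by simp
  hence g1: "(K+p^2)^2 \<le> (K + p^2 - q^2)^2 + (2*p*q)^2" using e1 by linarith
  have yp: "y^2 \<le> p^2" using py y0 by (simp add: power_mono)
  have "a*y*(2-y) \<le> K + y^2"
  proof -
    have "K + y^2 - a*y*(2-y) = (a-y)^2" using K by (simp add: power2_eq_square algebra_simps)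
    thus ?thesis by (metis diff_ge_0_iff_ge zero_le_power2)
  qed
  also have "\<dots> \<le> K + p^2" using yp by simp
  finally have h1: "a*y*(2-y) \<le> K + p^2" .
  have h0: "0 \<le> a*y*(2-y)" using a y0 y2 by simp
  have "(a*y*(2-y))^2 \<le> (K+p^2)^2" using h1 h0 by (simp add: power_mono)
  thus ?thesis using g1 by linarith
next
  case False
  have e1: "(K + p^2 - q^2)^2 + (2*p*q)^2 = (K - q^2 - p^2)^2 + 4*p^2*K"
    by (simp add: power2_eq_square algebra_simps)
  have yp: "y^2 \<le> p^2" using py y0 by (simp add: power_mono)
  have Kpos: "K \<ge> 0" using False by (smt (verit) zero_le_power2)
  have g1: "4*y^2*K \<le> (K + p^2 - q^2)^2 + (2*p*q)^2"
  proof -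
    have "4*y^2*K \<le> 4*p^2*K" using yp Kpos by (simp add: mult_right_mono)
    also have "\<dots> \<le> (K - q^2 - p^2)^2 + 4*p^2*K" by simp
    finally show ?thesis using e1 by simp
  qed
  have ylt: "y^2*(1+a) < a^2" using False yp K by (simp add: algebra_simps)
  have key: "(4+a)*y \<le> 4*a"
  proof (cases "a \<ge> 4")
    case True
    have "(4+a)*y \<le> (4+a)*2" using y2 a by (intro mult_left_mono) auto
    moreover have "(4+a)*2 \<le> 4*a" using True by simp
    ultimately show ?thesis by (rule order_trans)
  next
    case f: False
    show ?thesis
    proof (rule ccontr)
      assume "\<not> (4+a)*y \<le> 4*a"
      hence c: "4*a < (4+a)*y" by simp
      have "(4*a)^2 < ((4+a)*y)^2" by (rule power_strict_mono[OF c]) (use a in auto)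
      hence h1: "16*a^2 < (4+a)^2*y^2" by (simp add: power_mult_distrib)
      have h2: "16*a^2*(1+a) < (4+a)^2*y^2*(1+a)" using h1 a by (intro mult_strict_right_mono) auto
      have h3: "(4+a)^2*(y^2*(1+a)) < (4+a)^2*a^2" using ylt a by (intro mult_strict_left_mono) auto
      have "a^2*(16*(1+a)) < a^2*(4+a)^2" using h2 h3 by (simp add: algebra_simps)
      hence "16*(1+a) < (4+a)^2" using a by simp
      thus False using f a by (simp add: power2_eq_square algebra_simps)
    qed
  qed
  have "(a*y*(2-y))^2 \<le> 4*y^2*K"
  proof -
    have "4*y^2*K - (a*y*(2-y))^2 = a*y^3*(4*a - (4+a)*y)" unfolding K
      by (simp add: power2_eq_square power3_eq_cube algebra_simps)
    moreover have "a*y^3*(4*a - (4+a)*y) \<ge> 0" using key a y0 by simp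
    ultimately show ?thesis by linarith
  qed
  thus ?thesis using g1 by linarith
qed



lemma fin_ineq:
  fixes a y :: real and s :: complex
  assumes a: "a > 0" and y0: "0 \<le> y" and y2: "y \<le> 2" and s: "Re s > 0"
  shows "a*y*(2-y)*(cmod s)^2 \<le> cmod (of_real (a^2 - a*y^2) * s^2 + of_real (y^2) * (1+s)^2)"
proof -
  have s0: "s \<noteq> 0" using s by auto
  define K where "K = a^2 - a*y^2"
  define b where "b = (1+s)/s"
  define c where "c = of_real y * b"
  have eq: "of_real (a^2 - a*y^2) * s^2 + of_real (y^2) * (1+s)^2 = s^2 * (of_real K + c^2)"
  proof -
    have "s^2 * c^2 = of_real (y^2) * (1+s)^2"
      using s0 by (simp add: c_def b_def power_mult_distrib power_divide)
    thus ?thesis by (simp add: K_def distrib_left mult.commute)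
  qed
  have Reb: "Re b \<ge> 1"
  proof -
    have "b = 1 + 1/s" using s0 by (simp add: b_def add_divide_distrib)
    hence "Re b = 1 + Re s / (cmod s)^2" by (simp add: Re_divide cmod_power2)
    moreover have "Re s / (cmod s)^2 \<ge> 0" using s by simp
    ultimately show ?thesis by linarith
  qed
  define p where "p = Re c"
  define q where "q = Im c"
  have "Re c = y * Re b" by (simp add: c_def)
  moreover have "y * 1 \<le> y * Re b" by (rule mult_left_mono[OF Reb y0])
  ultimately have py: "y \<le> p" unfolding p_def by simp
  have core: "(a*y*(2-y))^2 \<le> (K + p^2 - q^2)^2 + (2*p*q)^2"
    by (rule real_core[OF a K_def py y0 y2])
  have "cmod (of_real K + c^2) = sqrt ((K + p^2 - q^2)^2 + (2*p*q)^2)"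
    unfolding cmod_def p_def q_def by (simp add: power2_eq_square algebra_simps)
  hence m: "a*y*(2-y) \<le> cmod (of_real K + c^2)" using core by (simp add: real_le_rsqrt)
  have "a*y*(2-y)*(cmod s)^2 \<le> cmod (of_real K + c^2) * (cmod s)^2"
    using m by (simp add: mult_right_mono)
  also have "\<dots> = cmod (s^2 * (of_real K + c^2))" by (simp add: norm_mult norm_power)
  finally show ?thesis using eq by simp
qed



fun xd :: "complex \<Rightarrow> nat \<Rightarrow> complex \<times> complex" where
  "xd h 0 = (1, 0)"
| "xd h (Suc k) = (let X = fst (xd h k); d = snd (xd h k); d' = d + h * X in (X + d', d'))"

definition XX :: "complex \<Rightarrow> nat \<Rightarrow> complex" where "XX h k = fst (xd h k)"
definition dd :: "complex \<Rightarrow> nat \<Rightarrow> complex" where "dd h k = snd (xd h k)"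

lemma XX0 [simp]: "XX h 0 = 1" and dd0 [simp]: "dd h 0 = 0"
  by (simp_all add: XX_def dd_def)

lemma dd_Suc [simp]: "dd h (Suc k) = dd h k + h * XX h k"
  by (simp add: XX_def dd_def Let_def)

lemma XX_Suc [simp]: "XX h (Suc k) = XX h k + dd h (Suc k)"
  by (simp add: XX_def dd_def Let_def)

declare xd.simps [simp del]

definition Xs :: "complex \<Rightarrow> nat \<Rightarrow> real" where "Xs h N = (\<Sum>j<N. (cmod (XX h j))^2)"
definition Ds :: "complex \<Rightarrow> nat \<Rightarrow> real" where "Ds h N = (\<Sum>j<N. (cmod (dd h (Suc j)))^2)"
definition Sg :: "complex \<Rightarrow> nat \<Rightarrow> complex" where "Sg h N = (\<Sum>j<N. cnj (XX h j) * dd h (Suc j))"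

lemma aux_C: "2 * Re (u * cnj (d + u)) = (cmod (d + u))^2 - (cmod d)^2 + (cmod u)^2"
  unfolding cmod_power2 by (simp add: power2_eq_square algebra_simps)

lemma Xs_Suc: "Xs h (Suc N) = Xs h N + (cmod (XX h N))^2" by (simp add: Xs_def)
lemma Ds_Suc: "Ds h (Suc N) = Ds h N + (cmod (dd h (Suc N)))^2" by (simp add: Ds_def)
lemma Sg_Suc: "Sg h (Suc N) = Sg h N + cnj (XX h N) * dd h (Suc N)" by (simp add: Sg_def)

lemma stepA: "d' = d + h*X \<Longrightarrow> d' * cnj (X + d') = d * cnj X + h * (X * cnj X) + d' * cnj d'"
  by (simp add: algebra_simps)

lemma idA: "dd h N * cnj (XX h N) = h * of_real (Xs h N) + of_real (Ds h N)"
proof (induction N)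
  case 0
  then show ?case by (simp add: Xs_def Ds_def)
next
  case (Suc N)
  have "dd h (Suc N) * cnj (XX h (Suc N)) = dd h N * cnj (XX h N) + h * (XX h N * cnj (XX h N)) + dd h (Suc N) * cnj (dd h (Suc N))"
    unfolding XX_Suc by (rule stepA) (rule dd_Suc)
  also have "\<dots> = h * of_real (Xs h (Suc N)) + of_real (Ds h (Suc N))"
    unfolding Suc.IH Xs_Suc Ds_Suc of_real_add complex_norm_square by (simp add: algebra_simps)
  finally show ?case .
qed

lemma idC: "2 * Re (h * cnj (Sg h N)) = (cmod (dd h N))^2 + (cmod h)^2 * Xs h N"
proof (induction N)
  case 0
  then show ?case by (simp add: Xs_def Sg_def)
next
  case (Suc N)
  have "2 * Re (h * cnj (Sg h (Suc N))) = 2 * Re (h * cnj (Sg h N)) + 2 * Re ((h * XX h N) * cnj (dd h N + h * XX h N))"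
    unfolding Sg_Suc by (simp add: algebra_simps)
  also have "2 * Re ((h * XX h N) * cnj (dd h N + h * XX h N)) = (cmod (dd h (Suc N)))^2 - (cmod (dd h N))^2 + (cmod h)^2 * (cmod (XX h N))^2"
    by (subst aux_C) (simp add: norm_mult power_mult_distrib)
  finally show ?case using Suc.IH unfolding Xs_Suc by (simp add: algebra_simps)
qed

lemma CS: "cmod (Sg h N) \<le> sqrt (Xs h N * Ds h N)"
proof -
  have "cmod (Sg h N) \<le> (\<Sum>j<N. cmod (XX h j) * cmod (dd h (Suc j)))"
    unfolding Sg_def by (rule order_trans[OF norm_sum]) (simp add: norm_mult)
  also have "\<dots> \<le> sqrt (Xs h N * Ds h N)"
    unfolding Xs_def Ds_def by (rule real_le_rsqrt) (rule Cauchy_Schwarz_ineq_sum)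
  finally show ?thesis .
qed

lemma idC': "(cmod (dd h N))^2 + (cmod h)^2 * Xs h N \<le> 2 * cmod h * sqrt (Xs h N * Ds h N)"
proof -
  have "2 * Re (h * cnj (Sg h N)) \<le> 2 * cmod (h * cnj (Sg h N))"
    using complex_Re_le_cmod[of "h * cnj (Sg h N)"] by linarith
  also have "\<dots> = 2 * cmod h * cmod (Sg h N)" by (simp add: norm_mult)
  also have "\<dots> \<le> 2 * cmod h * sqrt (Xs h N * Ds h N)" using CS by (simp add: mult_left_mono)
  finally show ?thesis using idC by simp
qed

lemma Xs_ge: "N \<ge> 1 \<Longrightarrow> Xs h N \<ge> 1"
proof -
  assume "N \<ge> 1"
  hence "(\<Sum>j\<in>{0}. (cmod (XX h j))^2) \<le> (\<Sum>j<N. (cmod (XX h j))^2)"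
    by (intro sum_mono2) auto
  thus ?thesis by (simp add: Xs_def)
qed

lemma Ds_ge: "N \<ge> 1 \<Longrightarrow> Ds h N \<ge> (cmod h)^2"
proof -
  assume "N \<ge> 1"
  hence "(\<Sum>j\<in>{0}. (cmod (dd h (Suc j)))^2) \<le> (\<Sum>j<N. (cmod (dd h (Suc j)))^2)"
    by (intro sum_mono2) auto
  thus ?thesis by (simp add: Ds_def)
qed

lemma nz_state: "XX h k \<noteq> 0 \<or> dd h k \<noteq> 0"
proof (induction k)
  case 0 then show ?case by simp
next
  case (Suc k)
  show ?case
  proof (rule ccontr)
    assume "\<not> (XX h (Suc k) \<noteq> 0 \<or> dd h (Suc k) \<noteq> 0)"
    hence a: "XX h (Suc k) = 0" "dd h (Suc k) = 0" by auto
    hence "XX h k = 0" by simp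
    moreover from a this have "dd h k = 0" by simp
    ultimately show False using Suc.IH by simp
  qed
qed



lemma abstract_bound:
  fixes h d Xv :: complex and a XsV DsV :: real
  assumes a: "a > 0" and h0: "h \<noteq> 0" and Xp: "XsV > 0" and Dp: "DsV > 0"
    and A: "d * cnj Xv = h * of_real XsV + of_real DsV"
    and C: "(cmod d)^2 + (cmod h)^2 * XsV \<le> 2 * cmod h * sqrt (XsV * DsV)"
    and FI: "\<And>y. 0 \<le> y \<Longrightarrow> y \<le> 2 \<Longrightarrow> y*(2-y)*cmod h \<le> a * cmod (h + of_real (y^2))"
  shows "cmod d \<le> a * cmod Xv"
proof -
  define \<sigma> where "\<sigma> = sqrt XsV"
  define \<tau> where "\<tau> = sqrt DsV"
  have sig2: "\<sigma>^2 = XsV" using Xp by (simp add: \<sigma>_def)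
  have tau2: "\<tau>^2 = DsV" using Dp by (simp add: \<tau>_def)
  have sigp: "\<sigma> > 0" using Xp by (simp add: \<sigma>_def)
  have taup: "\<tau> > 0" using Dp by (simp add: \<tau>_def)
  have hp: "cmod h > 0" using h0 by simp
  define y where "y = cmod h * \<sigma> / \<tau>"
  have y0: "y \<ge> 0" using sigp taup by (simp add: y_def)
  have yt: "y * \<tau> = cmod h * \<sigma>" using taup by (simp add: y_def)
  have sq: "sqrt (XsV * DsV) = \<sigma> * \<tau>" by (simp add: \<sigma>_def \<tau>_def real_sqrt_mult)
  have e_le: "(cmod d)^2 \<le> \<tau>^2 * (y*(2-y))"
  proof -
    have "(cmod d)^2 \<le> 2 * cmod h * (\<sigma> * \<tau>) - (cmod h)^2 * \<sigma>^2" using C sq sig2 by simp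
    also have "\<dots> = 2 * (y*\<tau>) * \<tau> - (y*\<tau>)^2" using yt by (simp add: power_mult_distrib algebra_simps)
    also have "\<dots> = \<tau>^2 * (y*(2-y))" by (simp add: power2_eq_square algebra_simps)
    finally show ?thesis .
  qed
  have ny: "y*(2-y) \<ge> 0"
  proof -
    have "0 \<le> \<tau>^2 * (y*(2-y))" using e_le by (metis order_trans zero_le_power2)
    thus ?thesis using taup by (simp add: zero_le_mult_iff)
  qed
  have y2: "y \<le> 2"
  proof (rule ccontr)
    assume "\<not> y \<le> 2"
    hence "y > 0" "2 - y < 0" by auto
    hence "y*(2-y) < 0" by (simp add: mult_pos_neg)
    thus False using ny by simp
  qed
  have fi: "y*(2-y)*cmod h \<le> a * cmod (h + of_real (y^2))" using FI y0 y2 by simp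
  have key: "cnj h * (h * of_real XsV + of_real DsV) = of_real DsV * (of_real (y^2) + cnj h)"
  proof -
    have "(cmod h)^2 * XsV = y^2 * DsV"
      using yt sig2 tau2 by (metis power_mult_distrib)
    hence "cnj h * h * of_real XsV = of_real (y^2 * DsV)"
      by (metis complex_norm_square mult.commute of_real_mult)
    thus ?thesis by (simp add: algebra_simps)
  qed
  have "cmod h * (cmod d * cmod Xv) = DsV * cmod (h + of_real (y^2))"
  proof -
    have "cmod h * (cmod d * cmod Xv) = cmod (cnj h * (d * cnj Xv))" by (simp add: norm_mult)
    also have "\<dots> = cmod (of_real DsV * (of_real (y^2) + cnj h))" using A key by simp
    also have "\<dots> = DsV * cmod (cnj (h + of_real (y^2)))" using Dp by (simp add: norm_mult add.commute)
    also have "\<dots> = DsV * cmod (h + of_real (y^2))" by (simp only: complex_mod_cnj)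
    finally show ?thesis .
  qed
  note eqm = this
  have "DsV * (y*(2-y)*cmod h) \<le> DsV * (a * cmod (h + of_real (y^2)))"
    using fi Dp by (intro mult_left_mono) auto
  also have "\<dots> = a * (cmod h * (cmod d * cmod Xv))" using eqm by simp
  finally have m: "a * (cmod h * (cmod d * cmod Xv)) \<ge> DsV * (y*(2-y)*cmod h)" .
  have "(cmod d)^2 * cmod h \<le> (\<tau>^2 * (y*(2-y))) * cmod h"
    using e_le hp by (intro mult_right_mono) auto
  hence "DsV * (y*(2-y)*cmod h) \<ge> (cmod d)^2 * cmod h"
    using tau2 by (simp add: algebra_simps)
  hence "(cmod d)^2 * cmod h \<le> (a * (cmod d * cmod Xv)) * cmod h" using m by (simp add: algebra_simps)
  hence "(cmod d)^2 \<le> a * (cmod d * cmod Xv)" using hp by simp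
  hence "cmod d * cmod d \<le> cmod d * (a * cmod Xv)" by (simp add: power2_eq_square algebra_simps)
  thus ?thesis
    by (cases "cmod d = 0") (use a in auto)
qed



definition Hpol :: "real \<Rightarrow> complex poly" where "Hpol a = [:0, 0, complex_of_real (a^2):]"
definition Dpol :: "real \<Rightarrow> complex poly" where "Dpol a = [:1, 2, complex_of_real (1 - a):]"

fun pq :: "real \<Rightarrow> nat \<Rightarrow> complex poly \<times> complex poly" where
  "pq a 0 = (0, 1)"
| "pq a (Suc N) = (let p = fst (pq a N); q = snd (pq a N); p' = p * Dpol a + Hpol a * q in (p', p' + Dpol a * q))"

definition pn :: "real \<Rightarrow> nat \<Rightarrow> complex poly" where "pn a N = fst (pq a N)"
definition qn :: "real \<Rightarrow> nat \<Rightarrow> complex poly" where "qn a N = snd (pq a N)"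

lemma pn0 [simp]: "pn a 0 = 0" and qn0 [simp]: "qn a 0 = 1"
  by (simp_all add: pn_def qn_def)
lemma pn_Suc: "pn a (Suc N) = pn a N * Dpol a + Hpol a * qn a N"
  by (simp add: pn_def qn_def Let_def)
lemma qn_Suc: "qn a (Suc N) = pn a (Suc N) + Dpol a * qn a N"
  by (simp add: pn_def qn_def Let_def)
declare pq.simps [simp del]

lemma poly_Hpol: "poly (Hpol a) s = of_real (a^2) * s^2"
  by (simp add: Hpol_def power2_eq_square algebra_simps)
lemma poly_Dpol: "poly (Dpol a) s = 1 + 2 * s + of_real (1-a) * s^2"
  by (simp add: Dpol_def power2_eq_square algebra_simps)

lemma Dzero_a: assumes s: "Re s > 0" and D: "1 + 2 * s + of_real (1-a) * s^2 = 0" shows "a \<ge> 1"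
proof -
  have s0: "s \<noteq> 0" using s by auto
  define b where "b = 1 + 1/s"
  have "b^2 = (1 + 2 * s + s^2)/s^2" using s0 by (simp add: b_def field_simps power2_eq_square)
  also have "1 + 2 * s + s^2 = of_real a * s^2" using D by (simp add: algebra_simps)
  finally have b2: "b^2 = of_real a" using s0 by simp
  have Reb: "Re b > 0" using s by (simp add: b_def Re_divide cmod_power2 add_pos_nonneg)
  have Reb1: "Re b \<ge> 1" using s by (simp add: b_def Re_divide cmod_power2)
  have "Im (b^2) = 2 * Re b * Im b" by (simp add: power2_eq_square)
  hence "Im b = 0" using b2 Reb by simp
  hence "Re (b^2) = (Re b)^2" by (simp add: power2_eq_square)
  hence "a = (Re b)^2" using b2 by simp
  moreover have "(Re b)^2 \<ge> 1" using Reb1 by (simp add: one_le_power)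
  ultimately show ?thesis by simp
qed

lemma rel_xd:
  assumes "poly (Dpol a) s \<noteq> 0"
  defines "h \<equiv> poly (Hpol a) s / poly (Dpol a) s"
  shows "poly (pn a N) s = poly (Dpol a) s ^ N * dd h N \<and> poly (qn a N) s = poly (Dpol a) s ^ N * XX h N"
proof (induction N)
  case 0 then show ?case by simp
next
  case (Suc N)
  have Hh: "poly (Hpol a) s = h * poly (Dpol a) s" using assms by (simp add: h_def)
  have p: "poly (pn a (Suc N)) s = poly (Dpol a) s ^ Suc N * dd h (Suc N)"
    unfolding pn_Suc using Suc.IH Hh by (simp add: algebra_simps)
  have q: "poly (qn a (Suc N)) s = poly (Dpol a) s ^ Suc N * XX h (Suc N)"
    unfolding qn_Suc poly_add p using Suc.IH by (simp add: algebra_simps)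
  show ?case using p q by simp
qed

lemma pointwise:
  assumes a: "a > 0" and s: "Re s > 0"
  shows "poly (qn a N) s \<noteq> 0 \<and> cmod (poly (pn a N) s) \<le> a * cmod (poly (qn a N) s)"
proof (cases "poly (Dpol a) s = 0")
  case True
  have a1: "a \<ge> 1" using Dzero_a[OF s] True by (simp add: poly_Dpol)
  have hz: "poly (Hpol a) s \<noteq> 0" using a s by (auto simp: poly_Hpol)
  have ind: "poly (qn a N) s = poly (Hpol a) s ^ N \<and> (N \<ge> 1 \<longrightarrow> poly (pn a N) s = poly (qn a N) s) \<and> (N = 0 \<longrightarrow> poly (pn a N) s = 0)"
  proof (induction N)
    case 0 then show ?case by simp
  next
    case (Suc N)
    have "poly (pn a (Suc N)) s = poly (Hpol a) s * poly (qn a N) s" unfolding pn_Suc using True by simp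
    moreover have "poly (qn a (Suc N)) s = poly (pn a (Suc N)) s" unfolding qn_Suc using True by simp
    ultimately show ?case using Suc.IH by simp
  qed
  have qnz: "poly (qn a N) s \<noteq> 0" using ind hz by simp
  have "cmod (poly (pn a N) s) \<le> cmod (poly (qn a N) s)" using ind by (cases N) auto
  also have "\<dots> \<le> a * cmod (poly (qn a N) s)" using a1 by (simp add: mult_le_cancel_right1)
  finally show ?thesis using qnz by simp
next
  case False
  define Dv where "Dv = poly (Dpol a) s"
  define h where "h = poly (Hpol a) s / poly (Dpol a) s"
  have Dv0: "Dv \<noteq> 0" using False by (simp add: Dv_def)
  have rel: "poly (pn a N) s = Dv ^ N * dd h N \<and> poly (qn a N) s = Dv ^ N * XX h N"
    using rel_xd[OF False] by (simp add: Dv_def h_def)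
  show ?thesis
  proof (cases "N = 0")
    case True then show ?thesis using a by simp
  next
    case N: False
    have s0: "s \<noteq> 0" using s by auto
    have h0: "h \<noteq> 0" using s0 a False by (simp add: h_def poly_Hpol)
    have Xp: "Xs h N > 0" using Xs_ge[of N h] N by simp
    have "(cmod h)^2 > 0" using h0 by simp
    hence Dpos: "Ds h N > 0" using Ds_ge[of N h] N by linarith
    have FI: "y*(2-y)*cmod h \<le> a * cmod (h + of_real (y^2))" if y0: "0 \<le> y" and y2: "y \<le> 2" for y
    proof -
      have f: "a*y*(2-y)*(cmod s)^2 \<le> cmod (of_real (a^2 - a*y^2) * s^2 + of_real (y^2) * (1+s)^2)"
        by (rule fin_ineq[OF a y0 y2 s])
      have E: "h + of_real (y^2) = (of_real (a^2 - a*y^2) * s^2 + of_real (y^2) * (1+s)^2) / Dv"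
      proof -
        have E1: "h + of_real (y^2) = (poly (Hpol a) s + of_real (y^2) * Dv) / Dv"
          using Dv0 unfolding h_def Dv_def[symmetric] by (simp add: add_divide_distrib)
        have E2: "poly (Hpol a) s + of_real (y^2) * Dv = of_real (a^2 - a*y^2) * s^2 + of_real (y^2) * (1+s)^2"
          by (simp add: Dv_def poly_Hpol poly_Dpol algebra_simps power2_eq_square)
        show ?thesis using E1 E2 by simp
      qed
      have hm: "cmod h = a^2 * (cmod s)^2 / cmod Dv"
        unfolding h_def Dv_def[symmetric] using a by (simp add: poly_Hpol norm_divide norm_mult norm_power)
      have "y*(2-y)*cmod h = a * (a*y*(2-y)*(cmod s)^2) / cmod Dv"
        using hm by (simp add: power2_eq_square)
      also have "\<dots> \<le> a * cmod (of_real (a^2 - a*y^2) * s^2 + of_real (y^2) * (1+s)^2) / cmod Dv"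
        using f a Dv0 by (intro divide_right_mono mult_left_mono) auto
      also have "\<dots> = a * cmod (h + of_real (y^2))" using E by (simp add: norm_divide)
      finally show ?thesis .
    qed
    have bd: "cmod (dd h N) \<le> a * cmod (XX h N)"
      by (rule abstract_bound[OF a h0 Xp Dpos idA idC' FI])
    have Xnz: "XX h N \<noteq> 0"
    proof
      assume "XX h N = 0"
      hence "dd h N = 0" using bd by simp
      thus False using nz_state[of h N] \<open>XX h N = 0\<close> by simp
    qed
    have "cmod (poly (pn a N) s) = cmod Dv ^ N * cmod (dd h N)" using rel by (simp add: norm_mult norm_power)
    also have "\<dots> \<le> cmod Dv ^ N * (a * cmod (XX h N))" using bd by (simp add: mult_left_mono)
    also have "\<dots> = a * cmod (poly (qn a N) s)" using rel by (simp add: norm_mult norm_power)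
    finally show ?thesis using rel Dv0 Xnz by simp
  qed
qed



lemma Dpol_nz: "Dpol a \<noteq> 0"
proof
  assume "Dpol a = 0"
  hence "poly (Dpol a) 0 = 0" by simp
  thus False by (simp add: poly_Dpol)
qed

lemma hfun_eq: "hfun a = Fract (Hpol a) (Dpol a)"
  by (simp add: hfun_def Hpol_def Dpol_def)

lemma Ffam_Fract:
  assumes a: "a > 0"
  shows "qn a N \<noteq> 0 \<and> Ffam a N = Fract (pn a N) (qn a N)"
proof (induction N)
  case 0
  then show ?case by (simp add: Zero_fract_def)
next
  case (Suc N)
  define p where "p = pn a N"
  define q where "q = qn a N"
  have q0: "q \<noteq> 0" using Suc.IH by (simp add: q_def)
  have F: "Ffam a N = Fract p q" using Suc.IH by (simp add: p_def q_def)
  have D0: "Dpol a \<noteq> 0" by (rule Dpol_nz)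
  have qS: "qn a (Suc N) \<noteq> 0"
  proof
    assume "qn a (Suc N) = 0"
    hence "poly (qn a (Suc N)) 1 = 0" by simp
    thus False using pointwise[OF a, of 1 "Suc N"] by simp
  qed
  have qD: "q * Dpol a \<noteq> 0" using q0 D0 by simp
  have e1: "Ffam a N + hfun a = Fract (pn a (Suc N)) (q * Dpol a)"
    unfolding F hfun_eq using q0 D0 by (simp add: pn_Suc p_def q_def algebra_simps)
  have e2: "Ffam a N + hfun a + 1 = Fract (qn a (Suc N)) (q * Dpol a)"
    unfolding e1 One_fract_def using qD by (simp add: qn_Suc q_def algebra_simps)
  have "Ffam a (Suc N) = Fract (pn a (Suc N)) (q * Dpol a) / Fract (qn a (Suc N)) (q * Dpol a)"
    using e1 e2 by simp
  also have "\<dots> = Fract ((q * Dpol a) * pn a (Suc N)) ((q * Dpol a) * qn a (Suc N))"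
    by (simp add: mult.commute)
  also have "\<dots> = Fract (pn a (Suc N)) (qn a (Suc N))"
    by (rule mult_fract_cancel[OF qD])
  finally show ?case using qS by simp
qed

lemma reval_Fract:
  assumes q0: "q \<noteq> 0" and qs: "poly q s \<noteq> 0"
  shows "poly (rden (Fract p q)) s \<noteq> 0 \<and> reval (Fract p q) s = poly p s / poly q s"
proof -
  obtain r t where qo: "quot_of_fract (Fract p q) = (r, t)" by (cases "quot_of_fract (Fract p q)")
  have "quot_to_fract (quot_of_fract (Fract p q)) = Fract p q" by simp
  hence Frt: "Fract r t = Fract p q" using qo by (simp add: quot_to_fract_def)
  have "(r, t) \<in> normalized_fracts" using quot_of_fract_in_normalized_fracts[of "Fract p q"] qo by simp
  hence cop: "coprime r t" and ut: "unit_factor t = 1" by (auto simp: normalized_fracts_def)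
  have t0: "t \<noteq> 0" using ut by auto
  have rq: "r * q = p * t" using Frt t0 q0 by (simp add: eq_fract)
  hence pe: "poly r s * poly q s = poly p s * poly t s" by (metis poly_mult)
  have ts: "poly t s \<noteq> 0"
  proof
    assume "poly t s = 0"
    hence "poly r s = 0" using pe qs by simp
    thus False using coprime_poly_0[OF cop, of s] \<open>poly t s = 0\<close> by simp
  qed
  have "reval (Fract p q) s = poly r s / poly t s" by (simp add: reval_def rnum_def rden_def qo)
  also have "\<dots> = poly p s / poly q s" using pe ts qs by (simp add: field_simps)
  finally show ?thesis using ts qo by (simp add: rden_def)
qed

lemma each_N:
  assumes a: "a > 0"
  shows "Hinf_norm (Ffam a N) \<le> ereal a"
proof -
  define G where "G = Ffam a N"
  have FF: "qn a N \<noteq> 0" "G = Fract (pn a N) (qn a N)" using Ffam_Fract[OF a, of N] by (simp_all add: G_def)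
  have pt: "poly (rden G) s \<noteq> 0 \<and> cmod (reval G s) \<le> a" if s: "Re s > 0" for s
  proof -
    have pw: "poly (qn a N) s \<noteq> 0" "cmod (poly (pn a N) s) \<le> a * cmod (poly (qn a N) s)"
      using pointwise[OF a s, of N] by auto
    have rv: "poly (rden G) s \<noteq> 0" "reval G s = poly (pn a N) s / poly (qn a N) s"
      using reval_Fract[OF FF(1) pw(1), of "pn a N"] FF(2) by auto
    have "cmod (reval G s) = cmod (poly (pn a N) s) / cmod (poly (qn a N) s)"
      using rv by (simp add: norm_divide)
    also have "\<dots> \<le> a" using pw by (simp add: divide_le_eq)
    finally show ?thesis using rv by simp
  qed
  have hol: "(reval G) holomorphic_on {s. 0 < Re s}"
  proof -
    have "(\<lambda>s. poly (rnum G) s / poly (rden G) s) holomorphic_on {s. 0 < Re s}"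
      using pt by (intro holomorphic_intros) auto
    thus ?thesis by (simp add: reval_def[abs_def])
  qed
  have bdd: "bounded (reval G ` {s. 0 < Re s})"
    unfolding bounded_iff using pt by auto
  have inH: "in_Hinf G" unfolding in_Hinf_def using hol bdd pt by auto
  have "(SUP s\<in>{s. 0 < Re s}. ereal (cmod (reval G s))) \<le> ereal a"
    by (rule SUP_least) (use pt in auto)
  thus ?thesis using inH by (simp add: Hinf_norm_def G_def)
qed

theorem theorem1:
  fixes a :: real
  assumes "a > 0"
  shows "(SUP N. Hinf_norm (Ffam a N)) \<le> ereal a"
  by (rule SUP_least) (use each_N[OF assms] in auto)

end
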